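(* Consider a discounted Markov decision process with Borel state space $\mathcal{S}$, action sets $\mathcal{A}(s)$, transition kernel $P(\cdot\mid\alpha,s)$, bounded reward $r(\alpha,s)$, and discount factor $\beta\in(0,1)$; fix $\tau\in(0,1)$ and a stationary policy $\pi(\cdot\mid s)$. Let $\mathcal{T}^{\tau}_{\pi}$ and $\mathcal{T}^{\tau}_{*}$ be the operators on bounded functions $V:\mathcal{S}\to\mathbb{R}$ given by $$(\mathcal{T}^{\tau}_{\pi}V)(s)=Q_{\tau}\big[r(\alpha,s)+\beta V(s')\,\big|\,s\big],\ \alpha\sim\pi(\cdot\mid s),\ s'\sim P(\cdot\mid\alpha,s),$$ $$(\mathcal{T}^{\tau}_{*}V)(s)=\max_{\alpha\in\mathcal{A}(s)}Q_{\tau}\big[r(\alpha,s)+\beta V(s')\,\big|\,s\big],\ s'\sim P(\cdot\mid\alpha,s).$$ Then $\mathcal{T}^{\tau}_{\pi}$ and $\mathcal{T}^{\tau}_{*}$ admit unique fixed points $v^{\tau}_{\pi}$ and $v^{\tau}_{*}$ (among bounded functions), and for any bounded initial $V_0$ the iterations $V_{k+1}=\mathcal{T}^{\tau}_{\pi}V_k$ and $V_{k+1}=\mathcal{T}^{\tau}_{*}V_k$ converge in $\|\cdot\|_\infty$ to $v^{\tau}_{\pi}$ and $v^{\tau}_{*}$ respectively.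
   Context: For a real random variable $Z$ with CDF $F_Z$, $Q_\tau[Z]=\inf\{x\in\mathbb{R}: F_Z(x)\ge\tau\}$; $Q_\tau[\,\cdot\mid s]$ is the $\tau$-quantile of the conditional law given the current state $s$. The operators are taken to be well defined, mapping bounded (measurable) functions to bounded (measurable) functions, with the maximum over $\mathcal{A}(s)$ attained. $\|f\|_\infty=\sup_{s}|f(s)|$. *)

theory Defs
  imports "HOL-Probability.Probability"
begin

definition quantile :: "real measure \<Rightarrow> real \<Rightarrow> real" where
  "quantile \<mu> \<tau> = Inf {x. measure \<mu> {..x} \<ge> \<tau>}"

definition bmeas :: "('s::topological_space \<Rightarrow> real) set" where
  "bmeas = {V. V \<in> borel_measurable borel \<and> bounded (range V)}"

definition supdist :: "('s \<Rightarrow> real) \<Rightarrow> ('s \<Rightarrow> real) \<Rightarrow> real" where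
  "supdist f g = (SUP s. \<bar>f s - g s\<bar>)"

definition law_pi ::
  "('s \<Rightarrow> 'a measure) \<Rightarrow> ('a \<Rightarrow> 's::topological_space \<Rightarrow> 's measure) \<Rightarrow> ('a \<Rightarrow> 's \<Rightarrow> real)
    \<Rightarrow> real \<Rightarrow> ('s \<Rightarrow> real) \<Rightarrow> 's \<Rightarrow> real measure" where
  "law_pi \<pi> P r \<beta> V s =
     bind (\<pi> s) (\<lambda>\<alpha>. distr (P \<alpha> s) borel (\<lambda>s'. r \<alpha> s + \<beta> * V s'))"

definition law_act ::
  "('a \<Rightarrow> 's::topological_space \<Rightarrow> 's measure) \<Rightarrow> ('a \<Rightarrow> 's \<Rightarrow> real)
    \<Rightarrow> real \<Rightarrow> ('s \<Rightarrow> real) \<Rightarrow> 'a \<Rightarrow> 's \<Rightarrow> real measure" where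
  "law_act P r \<beta> V \<alpha> s = distr (P \<alpha> s) borel (\<lambda>s'. r \<alpha> s + \<beta> * V s')"

definition T_pi where
  "T_pi \<pi> P r \<beta> \<tau> V = (\<lambda>s. quantile (law_pi \<pi> P r \<beta> V s) \<tau>)"

text \<open>Quantile optimality operator (the maximum over A(s), assumed attained, equals the Sup).\<close>
definition T_star where
  "T_star Acts P r \<beta> \<tau> V = (\<lambda>s. SUP \<alpha>\<in>Acts s. quantile (law_act P r \<beta> V \<alpha> s) \<tau>)"

end

theory Submission imports Defs begin

lemma qset_props:
  assumes rd: "real_distribution \<mu>" and t: "0 < \<tau>" "\<tau> < 1"
  shows "{x. measure \<mu> {..x} \<ge> \<tau>} \<noteq> {}" "bdd_below {x. measure \<mu> {..x} \<ge> \<tau>}"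
proof -
  interpret real_distribution \<mu> by fact
  have "\<forall>\<^sub>F x in at_top. cdf \<mu> x > \<tau>"
    using order_tendstoD(1)[OF cdf_lim_at_top_prob] t by simp
  then obtain b where "\<And>x. x \<ge> b \<Longrightarrow> cdf \<mu> x > \<tau>" by (auto simp: eventually_at_top_linorder)
  then show "{x. measure \<mu> {..x} \<ge> \<tau>} \<noteq> {}" unfolding cdf_def
    by (metis (mono_tags, lifting) empty_iff less_eq_real_def mem_Collect_eq order_refl)
  have "\<forall>\<^sub>F x in at_bot. cdf \<mu> x < \<tau>"
    using order_tendstoD(2)[OF cdf_lim_at_bot] t by simp
  then obtain a where a: "\<And>x. x \<le> a \<Longrightarrow> cdf \<mu> x < \<tau>" by (auto simp: eventually_at_bot_linorder)
  show "bdd_below {x. measure \<mu> {..x} \<ge> \<tau>}"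
    unfolding bdd_below_def
  proof (intro exI ballI)
    fix x assume "x \<in> {x. measure \<mu> {..x} \<ge> \<tau>}"
    then show "a \<le> x" using a[of x] unfolding cdf_def by (cases "x \<le> a") auto
  qed
qed

lemma quantile_le:
  assumes rm: "real_distribution \<mu>" and rn: "real_distribution \<nu>" and t: "0 < \<tau>" "\<tau> < 1"
  and F: "\<And>x. measure \<nu> {..x} \<le> measure \<mu> {..x+d}"
  shows "quantile \<mu> \<tau> \<le> quantile \<nu> \<tau> + d"
proof -
  note m = qset_props[OF rm t] and n = qset_props[OF rn t]
  have "Inf {x. measure \<mu> {..x} \<ge> \<tau>} - d \<le> Inf {x. measure \<nu> {..x} \<ge> \<tau>}"
  proof (rule cInf_greatest[OF n(1)])
    fix x assume "x \<in> {x. measure \<nu> {..x} \<ge> \<tau>}"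
    then have "x + d \<in> {x. measure \<mu> {..x} \<ge> \<tau>}" using F[of x] by auto
    then have "Inf {x. measure \<mu> {..x} \<ge> \<tau>} \<le> x + d" by (rule cInf_lower[OF _ m(2)])
    then show "Inf {x. measure \<mu> {..x} \<ge> \<tau>} - d \<le> x" by simp
  qed
  then show ?thesis unfolding quantile_def by simp
qed

context
  fixes Am :: "'a measure" and P :: "'a \<Rightarrow> 's::topological_space \<Rightarrow> 's measure"
    and r :: "'a \<Rightarrow> 's \<Rightarrow> real" and \<pi> :: "'s \<Rightarrow> 'a measure" and \<beta> :: real and s :: 's
  assumes kernel: "(\<lambda>\<alpha>. P \<alpha> s) \<in> measurable Am (prob_algebra borel)"
    and r_meas: "(\<lambda>\<alpha>. r \<alpha> s) \<in> borel_measurable Am"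
    and policy: "prob_space (\<pi> s)" "sets (\<pi> s) = sets Am"
begin

lemma P_props: assumes "\<alpha> \<in> space Am" shows "prob_space (P \<alpha> s)" "sets (P \<alpha> s) = sets borel"
  using measurable_space[OF kernel assms] by (auto simp: space_prob_algebra)

lemma law_act_real:
  assumes "\<alpha> \<in> space Am" and V: "V \<in> borel_measurable borel"
  shows "real_distribution (law_act P r \<beta> V \<alpha> s)"
    "emeasure (law_act P r \<beta> V \<alpha> s) {..x} = emeasure (P \<alpha> s) {s'\<in>space (P \<alpha> s). r \<alpha> s + \<beta> * V s' \<le> x}"
proof -
  note pp = P_props[OF assms(1)]
  have m: "(\<lambda>s'. r \<alpha> s + \<beta> * V s') \<in> borel_measurable (P \<alpha> s)"
    using V by (simp add: measurable_cong_sets[OF pp(2) refl])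
  show "real_distribution (law_act P r \<beta> V \<alpha> s)"
    unfolding law_act_def real_distribution_def real_distribution_axioms_def
    using prob_space.prob_space_distr[OF pp(1) m] by simp
  show "emeasure (law_act P r \<beta> V \<alpha> s) {..x} = emeasure (P \<alpha> s) {s'\<in>space (P \<alpha> s). r \<alpha> s + \<beta> * V s' \<le> x}"
    unfolding law_act_def using m by (subst emeasure_distr) (auto intro!: arg_cong[where f="emeasure (P \<alpha> s)"])
qed

lemma K_meas:
  assumes V: "V \<in> borel_measurable borel"
  shows "(\<lambda>\<alpha>. law_act P r \<beta> V \<alpha> s) \<in> Am \<rightarrow>\<^sub>M prob_algebra borel"
proof (rule measurable_prob_algebraI)
  show "\<And>\<alpha>. \<alpha> \<in> space Am \<Longrightarrow> prob_space (law_act P r \<beta> V \<alpha> s)"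
    using law_act_real(1)[OF _ V] real_distribution_def by blast
  have f: "(\<lambda>(\<alpha>, s'). r \<alpha> s + \<beta> * V s') \<in> borel_measurable (Am \<Otimes>\<^sub>M borel)"
    using r_meas V by measurable
  show "(\<lambda>\<alpha>. law_act P r \<beta> V \<alpha> s) \<in> Am \<rightarrow>\<^sub>M subprob_algebra borel"
    unfolding law_act_def
    using measurable_distr2[OF f measurable_prob_algebraD[OF kernel]] by simp
qed

lemma law_pi_eq: "law_pi \<pi> P r \<beta> V s = \<pi> s \<bind> (\<lambda>\<alpha>. law_act P r \<beta> V \<alpha> s)"
  unfolding law_pi_def law_act_def ..

lemma pi_space: "\<pi> s \<in> space (prob_algebra Am)"
  using policy by (simp add: space_prob_algebra)

lemma K_meas': "V \<in> borel_measurable borel \<Longrightarrow> (\<lambda>\<alpha>. law_act P r \<beta> V \<alpha> s) \<in> \<pi> s \<rightarrow>\<^sub>M prob_algebra borel"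
  using K_meas measurable_cong_sets[OF policy(2) refl] by blast

lemma law_pi_real:
  assumes V: "V \<in> borel_measurable borel"
  shows "real_distribution (law_pi \<pi> P r \<beta> V s)"
    "emeasure (law_pi \<pi> P r \<beta> V s) {..x} = (\<integral>\<^sup>+\<alpha>. emeasure (law_act P r \<beta> V \<alpha> s) {..x} \<partial>\<pi> s)"
proof -
  have ps: "\<pi> s \<in> space (prob_algebra (\<pi> s))"
    using policy by (simp add: space_prob_algebra)
  show "real_distribution (law_pi \<pi> P r \<beta> V s)"
    unfolding law_pi_eq real_distribution_def real_distribution_axioms_def
    using prob_space_bind'[OF ps K_meas'[OF V]] sets_bind'[OF ps K_meas'[OF V]] by simp
  show "emeasure (law_pi \<pi> P r \<beta> V s) {..x} = (\<integral>\<^sup>+\<alpha>. emeasure (law_act P r \<beta> V \<alpha> s) {..x} \<partial>\<pi> s)"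
    unfolding law_pi_eq by (rule emeasure_bind_prob_algebra[OF ps K_meas'[OF V]]) simp
qed

lemma law_act_cmp:
  assumes a: "\<alpha> \<in> space Am" and V: "V \<in> borel_measurable borel" and W: "W \<in> borel_measurable borel"
    and b: "0 \<le> \<beta>" and le: "\<And>s'. V s' \<le> W s' + c"
  shows "emeasure (law_act P r \<beta> W \<alpha> s) {..x} \<le> emeasure (law_act P r \<beta> V \<alpha> s) {..x + \<beta> * c}"
proof -
  note pp = P_props[OF a]
  have mV[measurable]: "V \<in> borel_measurable (P \<alpha> s)" using V by (simp add: measurable_cong_sets[OF pp(2) refl])
  have "{s'\<in>space (P \<alpha> s). r \<alpha> s + \<beta> * V s' \<le> x + \<beta> * c} \<in> sets (P \<alpha> s)" by measurable
  moreover have "{s'\<in>space (P \<alpha> s). r \<alpha> s + \<beta> * W s' \<le> x} \<subseteq> {s'\<in>space (P \<alpha> s). r \<alpha> s + \<beta> * V s' \<le> x + \<beta> * c}"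
  proof safe
    fix s' assume "r \<alpha> s + \<beta> * W s' \<le> x"
    moreover have "\<beta> * V s' \<le> \<beta> * W s' + \<beta> * c" using mult_left_mono[OF le[of s'] b] by (simp add: algebra_simps)
    ultimately show "r \<alpha> s + \<beta> * V s' \<le> x + \<beta> * c" by simp
  qed
  ultimately show ?thesis
    unfolding law_act_real(2)[OF a V] law_act_real(2)[OF a W] by (rule emeasure_mono[rotated])
qed

lemma law_pi_cmp:
  assumes V: "V \<in> borel_measurable borel" and W: "W \<in> borel_measurable borel"
    and b: "0 \<le> \<beta>" and le: "\<And>s'. V s' \<le> W s' + c"
  shows "emeasure (law_pi \<pi> P r \<beta> W s) {..x} \<le> emeasure (law_pi \<pi> P r \<beta> V s) {..x + \<beta> * c}"
  unfolding law_pi_real(2)[OF V] law_pi_real(2)[OF W]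
proof (rule nn_integral_mono)
  fix \<alpha> assume "\<alpha> \<in> space (\<pi> s)"
  then have "\<alpha> \<in> space Am" using sets_eq_imp_space_eq[OF policy(2)] by simp
  then show "emeasure (law_act P r \<beta> W \<alpha> s) {..x} \<le> emeasure (law_act P r \<beta> V \<alpha> s) {..x + \<beta> * c}"
    by (rule law_act_cmp[OF _ V W b le])
qed

end

lemma meas_from_emeas:
  assumes "real_distribution \<mu>" "real_distribution \<nu>" "emeasure \<nu> A \<le> emeasure \<mu> B"
  shows "measure \<nu> A \<le> measure \<mu> B"
  using assms finite_measure.emeasure_eq_measure[of \<mu>] finite_measure.emeasure_eq_measure[of \<nu>]
  by (simp add: real_distribution_def prob_space_def)

lemma zero_by_geom:
  fixes x C \<beta> :: real
  assumes "0 \<le> \<beta>" "\<beta> < 1" "\<And>k. \<bar>x\<bar> \<le> C * \<beta> ^ k"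
  shows "x = 0"
proof -
  have "(\<lambda>k. C * \<beta> ^ k) \<longlonglongrightarrow> C * 0"
    by (intro tendsto_mult tendsto_const LIMSEQ_power_zero) (use assms in auto)
  have "\<bar>x\<bar> \<le> C * 0" by (rule LIMSEQ_le_const[OF \<open>_ \<longlonglongrightarrow> C * 0\<close>]) (use assms(3) in auto)
  then show ?thesis by simp
qed

lemma bmeas_diff_bound:
  assumes "V \<in> bmeas" "W \<in> bmeas"
  shows "\<exists>c. \<forall>s. \<bar>V s - W s\<bar> \<le> c"
proof -
  obtain a where a: "\<And>s. \<bar>V s\<bar> \<le> a" using assms(1) unfolding bmeas_def bounded_iff by auto
  obtain b where b: "\<And>s. \<bar>W s\<bar> \<le> b" using assms(2) unfolding bmeas_def bounded_iff by auto
  have "\<bar>V s - W s\<bar> \<le> a + b" for s using a[of s] b[of s] by linarith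
  then show ?thesis by blast
qed

lemma supdist_bound:
  assumes "\<And>s. \<bar>f s - g s\<bar> \<le> c"
  shows "0 \<le> supdist f g" "supdist f g \<le> c"
proof -
  have bdd: "bdd_above (range (\<lambda>s. \<bar>f s - g s\<bar>))" using assms by (intro bdd_aboveI2) auto
  show "0 \<le> supdist f g" unfolding supdist_def
    by (rule cSUP_upper2[OF bdd UNIV_I]) simp
  show "supdist f g \<le> c" unfolding supdist_def
    by (rule cSUP_least) (use assms in auto)
qed

lemma contraction_fix:
  fixes T :: "('s::topological_space \<Rightarrow> real) \<Rightarrow> 's \<Rightarrow> real"
  assumes b: "0 < \<beta>" "\<beta> < 1" and inv: "\<And>V. V \<in> bmeas \<Longrightarrow> T V \<in> bmeas"
    and contr: "\<And>V W c s. V \<in> bmeas \<Longrightarrow> W \<in> bmeas \<Longrightarrow> (\<And>s. \<bar>V s - W s\<bar> \<le> c) \<Longrightarrow> \<bar>T V s - T W s\<bar> \<le> \<beta> * c"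
  shows "\<exists>v\<in>bmeas. T v = v \<and> (\<forall>w\<in>bmeas. T w = w \<longrightarrow> w = v)
           \<and> (\<forall>V0\<in>bmeas. (\<lambda>k. supdist ((T ^^ k) V0) v) \<longlonglongrightarrow> 0)"
proof -
  have inv_k: "(T ^^ k) V \<in> bmeas" if "V \<in> bmeas" for V k
    using that by (induction k) (auto intro: inv)
  have iter: "\<bar>(T ^^ k) V s - (T ^^ k) W s\<bar> \<le> \<beta> ^ k * c"
    if "V \<in> bmeas" "W \<in> bmeas" "\<And>s. \<bar>V s - W s\<bar> \<le> c" for V W c k s
  proof (induction k arbitrary: s)
    case 0 then show ?case using that by simp
  next
    case (Suc k)
    have "\<bar>T ((T ^^ k) V) s - T ((T ^^ k) W) s\<bar> \<le> \<beta> * (\<beta> ^ k * c)"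
      by (rule contr[OF inv_k[OF that(1)] inv_k[OF that(2)] Suc.IH])
    then show ?case by (simp add: mult.assoc)
  qed
  define Z :: "'s \<Rightarrow> real" where "Z = (\<lambda>_. 0)"
  have Z: "Z \<in> bmeas" unfolding bmeas_def Z_def by auto
  define U where "U k = (T ^^ k) Z" for k
  have U: "U k \<in> bmeas" for k unfolding U_def using inv_k[OF Z] .
  obtain B where B: "\<And>s. \<bar>T Z s - Z s\<bar> \<le> B" using bmeas_diff_bound[OF inv[OF Z] Z] by auto
  have B0: "0 \<le> B" using B[of undefined] by simp
  have step: "\<bar>U (Suc k) s - U k s\<bar> \<le> B * \<beta> ^ k" for k s
  proof -
    have "(T ^^ Suc k) Z = (T ^^ k) (T Z)" by (simp add: funpow_swap1)
    then show ?thesis using iter[OF inv[OF Z] Z B, of k s] unfolding U_def by (simp add: mult.commute)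
  qed
  define d where "d s i = U (Suc i) s - U i s" for s i
  have gs: "summable (\<lambda>i. B * \<beta> ^ i)" using b by (intro summable_mult summable_geometric) auto
  have ds: "summable (d s)" for s
    by (rule summable_comparison_test'[OF gs]) (use step in \<open>auto simp: d_def\<close>)
  define v where "v s = suminf (d s)" for s
  have tail: "\<bar>v s - U k s\<bar> \<le> (B / (1 - \<beta>)) * \<beta> ^ k" for s k
  proof -
    have "v s = (\<Sum>n. d s (n + k)) + (\<Sum>i<k. d s i)"
      unfolding v_def by (rule suminf_split_initial_segment[OF ds])
    moreover have "(\<Sum>i<k. d s i) = U k s"
      unfolding d_def by (subst sum_lessThan_telescope) (simp add: U_def Z_def)
    ultimately have e: "v s - U k s = (\<Sum>n. d s (n + k))" by simp
    have "norm (\<Sum>n. d s (n + k)) \<le> (\<Sum>n. (B * \<beta> ^ k) * \<beta> ^ n)"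
    proof (rule norm_suminf_le)
      show "norm (d s (n + k)) \<le> B * \<beta> ^ k * \<beta> ^ n" for n
        using step[of "n+k" s] by (simp add: d_def power_add mult.commute mult.left_commute)
      show "summable (\<lambda>n. B * \<beta> ^ k * \<beta> ^ n)" using b by (intro summable_mult summable_geometric) auto
    qed
    also have "\<dots> = (B * \<beta> ^ k) * (1 / (1 - \<beta>))"
      using b by (subst suminf_mult) (auto intro: summable_geometric simp: suminf_geometric)
    finally show ?thesis using e by simp
  qed
  have vlim: "(\<lambda>k. U k s) \<longlonglongrightarrow> v s" for s
  proof -
    have "(\<lambda>k. (B / (1 - \<beta>)) * \<beta> ^ k) \<longlonglongrightarrow> (B / (1 - \<beta>)) * 0"
      by (intro tendsto_mult tendsto_const LIMSEQ_power_zero) (use b in auto)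
    then have "(\<lambda>k. (B / (1 - \<beta>)) * \<beta> ^ k) \<longlonglongrightarrow> 0" by simp
    then have "(\<lambda>k. U k s - v s) \<longlonglongrightarrow> 0"
      by (rule Lim_null_comparison[rotated]) (use tail in \<open>auto simp: abs_minus_commute\<close>)
    then show ?thesis by (simp add: LIM_zero_cancel)
  qed
  have vm: "v \<in> borel_measurable borel"
    by (rule borel_measurable_LIMSEQ_real[OF vlim]) (use U in \<open>auto simp: bmeas_def\<close>)
  have vb: "bounded (range v)"
    unfolding bounded_iff
  proof (intro exI ballI)
    fix y assume "y \<in> range v"
    then obtain s where "y = v s" by auto
    then show "norm y \<le> B / (1 - \<beta>)" using tail[of s 0] by (simp add: U_def Z_def)
  qed
  have v: "v \<in> bmeas" using vm vb by (simp add: bmeas_def)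
  have fx: "T v = v"
  proof
    fix s
    have "\<bar>T v s - v s\<bar> \<le> (2 * B / (1 - \<beta>)) * \<beta> ^ k" for k
    proof -
      have "\<bar>T v s - T (U k) s\<bar> \<le> \<beta> * ((B / (1 - \<beta>)) * \<beta> ^ k)"
        by (rule contr[OF v U]) (use tail in \<open>auto\<close>)
      moreover have "T (U k) = U (Suc k)" by (simp add: U_def)
      moreover have "\<bar>U (Suc k) s - v s\<bar> \<le> (B / (1 - \<beta>)) * \<beta> ^ k"
      proof -
        have "\<bar>U (Suc k) s - v s\<bar> \<le> (B / (1 - \<beta>)) * \<beta> ^ Suc k"
          using tail[of s "Suc k"] by (simp add: abs_minus_commute)
        also have "\<dots> \<le> (B / (1 - \<beta>)) * \<beta> ^ k"
          using b B0 by (intro mult_left_mono power_decreasing) auto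
        finally show ?thesis .
      qed
      moreover have "\<beta> * ((B / (1 - \<beta>)) * \<beta> ^ k) \<le> (B / (1 - \<beta>)) * \<beta> ^ k"
        using b B0 by (intro mult_left_le_one_le) auto
      ultimately show ?thesis by simp
    qed
    then show "T v s = v s" using zero_by_geom[of \<beta> "T v s - v s" "2 * B / (1 - \<beta>)"] b by auto
  qed
  show ?thesis
  proof (intro bexI[OF _ v] conjI ballI impI)
    show "T v = v" by (rule fx)
  next
    fix w assume w: "w \<in> bmeas" "T w = w"
    obtain c where c: "\<And>s. \<bar>w s - v s\<bar> \<le> c" using bmeas_diff_bound[OF w(1) v] by auto
    have wk: "(T ^^ k) w = w" for k using w(2) by (induction k) auto
    have vk: "(T ^^ k) v = v" for k using fx by (induction k) auto
    show "w = v"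
    proof
      fix s
      show "w s = v s"
        using zero_by_geom[of \<beta> "w s - v s" c] iter[OF w(1) v c] b wk vk by (auto simp: mult.commute)
    qed
  next
    fix V0 :: "'s \<Rightarrow> real" assume V0: "V0 \<in> bmeas"
    obtain c where c: "\<And>s. \<bar>V0 s - v s\<bar> \<le> c" using bmeas_diff_bound[OF V0 v] by auto
    have vk: "(T ^^ k) v = v" for k using fx by (induction k) auto
    have bd: "\<bar>(T ^^ k) V0 s - v s\<bar> \<le> c * \<beta> ^ k" for k s
      using iter[OF V0 v c, of k s] vk by (simp add: mult.commute)
    have "(\<lambda>k. c * \<beta> ^ k) \<longlonglongrightarrow> c * 0"
      by (intro tendsto_mult tendsto_const LIMSEQ_power_zero) (use b in auto)
    then have lim: "(\<lambda>k. c * \<beta> ^ k) \<longlonglongrightarrow> 0" by simp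
    have l: "\<forall>\<^sub>F k in sequentially. 0 \<le> supdist ((T ^^ k) V0) v"
      using supdist_bound(1)[of "(T ^^ _) V0" v, OF bd] by (intro always_eventually allI) blast
    have u: "\<forall>\<^sub>F k in sequentially. supdist ((T ^^ k) V0) v \<le> c * \<beta> ^ k"
      using supdist_bound(2)[of "(T ^^ _) V0" v, OF bd] by (intro always_eventually allI) blast
    show "(\<lambda>k. supdist ((T ^^ k) V0) v) \<longlonglongrightarrow> 0"
      by (rule tendsto_sandwich[OF l u tendsto_const lim])
  qed
qed

lemma sup_max:
  fixes f :: "'a \<Rightarrow> real"
  assumes "a \<in> A" "\<And>x. x \<in> A \<Longrightarrow> f x \<le> f a"
  shows "(SUP x\<in>A. f x) = f a"
proof (rule antisym)
  show "(SUP x\<in>A. f x) \<le> f a" using assms by (intro cSUP_least) auto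
  show "f a \<le> (SUP x\<in>A. f x)" using assms by (intro cSUP_upper bdd_aboveI2) auto
qed

lemma abs_le_from_two: "(x::real) \<le> y + e \<Longrightarrow> y \<le> x + e \<Longrightarrow> \<bar>x - y\<bar> \<le> e"
  by linarith

theorem corollary1:
  fixes Am :: "'a measure"
    and Acts :: "'s::polish_space \<Rightarrow> 'a set"
    and P :: "'a \<Rightarrow> 's \<Rightarrow> 's measure"
    and r :: "'a \<Rightarrow> 's \<Rightarrow> real"
    and \<pi> :: "'s \<Rightarrow> 'a measure"
    and \<beta> \<tau> :: real
  assumes beta: "0 < \<beta>" "\<beta> < 1"
    and tau: "0 < \<tau>" "\<tau> < 1"
    and acts: "\<And>s. Acts s \<subseteq> space Am" "\<And>s. Acts s \<noteq> {}"
    and kernel: "\<And>s. (\<lambda>\<alpha>. P \<alpha> s) \<in> measurable Am (prob_algebra borel)"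
    and r_meas: "\<And>s. (\<lambda>\<alpha>. r \<alpha> s) \<in> borel_measurable Am"
    and r_bdd: "\<exists>M. \<forall>\<alpha> s. \<bar>r \<alpha> s\<bar> \<le> M"
    and policy: "\<And>s. prob_space (\<pi> s)" "\<And>s. sets (\<pi> s) = sets Am"
    and policy_supp: "\<And>s. Acts s \<in> sets Am \<and> emeasure (\<pi> s) (Acts s) = 1"
    and wd_pi: "\<And>V. V \<in> bmeas \<Longrightarrow> T_pi \<pi> P r \<beta> \<tau> V \<in> bmeas"
    and wd_star: "\<And>V. V \<in> bmeas \<Longrightarrow> T_star Acts P r \<beta> \<tau> V \<in> bmeas"
    and max_attained: "\<And>V s. V \<in> bmeas \<Longrightarrow>
         \<exists>\<alpha>\<in>Acts s. \<forall>\<alpha>'\<in>Acts s.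
            quantile (law_act P r \<beta> V \<alpha>' s) \<tau> \<le> quantile (law_act P r \<beta> V \<alpha> s) \<tau>"
  shows "(\<exists>v\<in>bmeas. T_pi \<pi> P r \<beta> \<tau> v = v
             \<and> (\<forall>w\<in>bmeas. T_pi \<pi> P r \<beta> \<tau> w = w \<longrightarrow> w = v)
             \<and> (\<forall>V0\<in>bmeas. (\<lambda>k. supdist ((T_pi \<pi> P r \<beta> \<tau> ^^ k) V0) v) \<longlonglongrightarrow> 0))
       \<and> (\<exists>v\<in>bmeas. T_star Acts P r \<beta> \<tau> v = v
             \<and> (\<forall>w\<in>bmeas. T_star Acts P r \<beta> \<tau> w = w \<longrightarrow> w = v)
             \<and> (\<forall>V0\<in>bmeas. (\<lambda>k. supdist ((T_star Acts P r \<beta> \<tau> ^^ k) V0) v) \<longlonglongrightarrow> 0))"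
proof -
  have b0: "0 \<le> \<beta>" using beta by simp
  have bm: "V \<in> borel_measurable borel" if "V \<in> bmeas" for V :: "'s \<Rightarrow> real"
    using that by (simp add: bmeas_def)
  have le1: "V s' \<le> W s' + c" and le2: "W s' \<le> V s' + c" if "\<And>s. \<bar>V s - W s\<bar> \<le> c" for V W :: "'s \<Rightarrow> real" and c s'
    using that[of s'] by linarith+
  note pctx = kernel r_meas policy(1) policy(2)
  have qpi: "quantile (law_pi \<pi> P r \<beta> V s) \<tau> \<le> quantile (law_pi \<pi> P r \<beta> W s) \<tau> + \<beta> * c"
    if V: "V \<in> bmeas" and W: "W \<in> bmeas" and le: "\<And>s'. V s' \<le> W s' + c" for V W c s
  proof (rule quantile_le[OF law_pi_real(1)[OF pctx bm[OF V]] law_pi_real(1)[OF pctx bm[OF W]] tau])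
    fix x show "measure (law_pi \<pi> P r \<beta> W s) {..x} \<le> measure (law_pi \<pi> P r \<beta> V s) {..x + \<beta> * c}"
      by (rule meas_from_emeas[OF law_pi_real(1)[OF pctx bm[OF V]] law_pi_real(1)[OF pctx bm[OF W]]
            law_pi_cmp[OF pctx bm[OF V] bm[OF W] b0 le]])
  qed
  have qact: "quantile (law_act P r \<beta> V \<alpha> s) \<tau> \<le> quantile (law_act P r \<beta> W \<alpha> s) \<tau> + \<beta> * c"
    if a: "\<alpha> \<in> space Am" and V: "V \<in> bmeas" and W: "W \<in> bmeas" and le: "\<And>s'. V s' \<le> W s' + c" for V W c s \<alpha>
  proof (rule quantile_le[OF law_act_real(1)[OF pctx a bm[OF V]] law_act_real(1)[OF pctx a bm[OF W]] tau])
    fix x show "measure (law_act P r \<beta> W \<alpha> s) {..x} \<le> measure (law_act P r \<beta> V \<alpha> s) {..x + \<beta> * c}"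
      by (rule meas_from_emeas[OF law_act_real(1)[OF pctx a bm[OF V]] law_act_real(1)[OF pctx a bm[OF W]]
            law_act_cmp[OF pctx a bm[OF V] bm[OF W] b0 le]])
  qed
  have A: "\<exists>v\<in>bmeas. T_pi \<pi> P r \<beta> \<tau> v = v
             \<and> (\<forall>w\<in>bmeas. T_pi \<pi> P r \<beta> \<tau> w = w \<longrightarrow> w = v)
             \<and> (\<forall>V0\<in>bmeas. (\<lambda>k. supdist ((T_pi \<pi> P r \<beta> \<tau> ^^ k) V0) v) \<longlonglongrightarrow> 0)"
  proof (rule contraction_fix[OF beta wd_pi])
    fix V W :: "'s \<Rightarrow> real" and c s
    assume V: "V \<in> bmeas" and W: "W \<in> bmeas" and d: "\<And>s. \<bar>V s - W s\<bar> \<le> c"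
    have l1: "V s' \<le> W s' + c" for s' using d[of s'] by linarith
    have l2: "W s' \<le> V s' + c" for s' using d[of s'] by linarith
    show "\<bar>T_pi \<pi> P r \<beta> \<tau> V s - T_pi \<pi> P r \<beta> \<tau> W s\<bar> \<le> \<beta> * c"
      unfolding T_pi_def
      by (rule abs_le_from_two[OF qpi[of V W c s, OF V W l1] qpi[of W V c s, OF W V l2]])
  qed
  have B: "\<exists>v\<in>bmeas. T_star Acts P r \<beta> \<tau> v = v
             \<and> (\<forall>w\<in>bmeas. T_star Acts P r \<beta> \<tau> w = w \<longrightarrow> w = v)
             \<and> (\<forall>V0\<in>bmeas. (\<lambda>k. supdist ((T_star Acts P r \<beta> \<tau> ^^ k) V0) v) \<longlonglongrightarrow> 0)"
  proof (rule contraction_fix[OF beta wd_star])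
    fix V W :: "'s \<Rightarrow> real" and c s
    assume V: "V \<in> bmeas" and W: "W \<in> bmeas" and d: "\<And>s. \<bar>V s - W s\<bar> \<le> c"
    have l1: "V s' \<le> W s' + c" for s' using d[of s'] by linarith
    have l2: "W s' \<le> V s' + c" for s' using d[of s'] by linarith
    have one: "T_star Acts P r \<beta> \<tau> X s \<le> T_star Acts P r \<beta> \<tau> Y s + \<beta> * c"
      if X: "X \<in> bmeas" and Y: "Y \<in> bmeas" and le: "\<And>s'. X s' \<le> Y s' + c" for X Y
    proof -
      obtain a where a: "a \<in> Acts s" and am: "\<And>a'. a' \<in> Acts s \<Longrightarrow>
          quantile (law_act P r \<beta> X a' s) \<tau> \<le> quantile (law_act P r \<beta> X a s) \<tau>"
        using max_attained[OF X, of s] by blast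
      obtain b where b: "b \<in> Acts s" and bm': "\<And>a'. a' \<in> Acts s \<Longrightarrow>
          quantile (law_act P r \<beta> Y a' s) \<tau> \<le> quantile (law_act P r \<beta> Y b s) \<tau>"
        using max_attained[OF Y, of s] by blast
      have "T_star Acts P r \<beta> \<tau> X s = quantile (law_act P r \<beta> X a s) \<tau>"
        unfolding T_star_def by (rule sup_max[where f="\<lambda>a. quantile (law_act P r \<beta> X a s) \<tau>", OF a am])
      moreover have "T_star Acts P r \<beta> \<tau> Y s = quantile (law_act P r \<beta> Y b s) \<tau>"
        unfolding T_star_def by (rule sup_max[where f="\<lambda>a. quantile (law_act P r \<beta> Y a s) \<tau>", OF b bm'])
      moreover have "quantile (law_act P r \<beta> X a s) \<tau> \<le> quantile (law_act P r \<beta> Y a s) \<tau> + \<beta> * c"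
        using a acts(1) by (intro qact[OF _ X Y le]) auto
      moreover have "quantile (law_act P r \<beta> Y a s) \<tau> \<le> quantile (law_act P r \<beta> Y b s) \<tau>"
        by (rule bm'[OF a])
      ultimately show ?thesis by linarith
    qed
    show "\<bar>T_star Acts P r \<beta> \<tau> V s - T_star Acts P r \<beta> \<tau> W s\<bar> \<le> \<beta> * c"
      by (rule abs_le_from_two[OF one[of V W, OF V W l1] one[of W V, OF W V l2]])
  qed
  from A B show ?thesis by blast
qed

end
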